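(* Let $F$ be a rooted forest, let $U_1,U_2$ be a partition of $V(F)$ into convex subsets, and let $m_1,m_2\in\mathbb{N}_0$. Then $\mathrm{OPTZ}(F[U_1],m_1)+\mathrm{OPTZ}(F[U_2],m_2)\le\mathrm{OPTZ}(F,m_1+m_2)$.
   Context: A set $U\subseteq V(F)$ is convex if any two vertices of $U$ connected in $F$ are also connected in the induced subforest $F[U]$. A tree-sum data structure is initialized with a weighted rooted forest $(F,w)$ with weights in a commutative group $G$ (some vertices may be auxiliary: weight $0$, no operation applies to them) and processes online $\textsf{cut}(v)$ (delete the edge from $v$ to its parent; legal only if $v$ is not a root), $\textsf{update-weight}(v,x)$ and $\textsf{tree-sum}(v)$ (sum of weights of the tree of the current forest containing $v$), in the group model (group elements may only be added and subtracted, no other inspection; correct for every commutative group). An initial-zero tree-sum data structure is one that only accepts initial forests in which all weights are zero. $\mathrm{OPTZ}(F,m)$ is the minimum, over initial-zero tree-sum data structures $D$, of the maximum number of group additions and subtractions $D$ performs when executing a legal sequence of $m$ operations starting from $F$ with zero weights, maximized over operation sequences. *)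

theory Defs
  imports Main
begin

record 'v rforest =
  verts :: "'v set"
  par   :: "'v \<Rightarrow> 'v option"
  aux   :: "'v set"

definition pedges :: "'v rforest \<Rightarrow> ('v \<times> 'v) set" where
  "pedges F = {(v, u). par F v = Some u}"

definition rooted_forest :: "'v rforest \<Rightarrow> bool" where
  "rooted_forest F \<longleftrightarrow> finite (verts F) \<and> aux F \<subseteq> verts F \<and>
     (\<forall>v u. par F v = Some u \<longrightarrow> v \<in> verts F \<and> u \<in> verts F) \<and>
     acyclic (pedges F)"

definition connected :: "'v rforest \<Rightarrow> 'v \<Rightarrow> 'v \<Rightarrow> bool" where
  "connected F u v \<longleftrightarrow> u \<in> verts F \<and> v \<in> verts F \<and>
     (u, v) \<in> (pedges F \<union> (pedges F)\<inverse>)\<^sup>*"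

definition induced :: "'v rforest \<Rightarrow> 'v set \<Rightarrow> 'v rforest" where
  "induced F U = \<lparr> verts = verts F \<inter> U,
     par = (\<lambda>v. if v \<in> U then (case par F v of None \<Rightarrow> None
                                   | Some u \<Rightarrow> if u \<in> U then Some u else None)
                 else None),
     aux = aux F \<inter> U \<rparr>"

definition convex :: "'v rforest \<Rightarrow> 'v set \<Rightarrow> bool" where
  "convex F U \<longleftrightarrow> U \<subseteq> verts F \<and>
     (\<forall>u\<in>U. \<forall>v\<in>U. connected F u v \<longrightarrow> connected (induced F U) u v)"

text \<open>Operation descriptors; the group argument of the i-th operation (if it is an
  update) is the formal generator number i.\<close>
datatype 'v op = Cut 'v | Upd 'v | Qry 'v

fun apply_op :: "'v rforest \<Rightarrow> 'v op \<Rightarrow> 'v rforest" where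
  "apply_op F (Cut v) = F\<lparr>par := (par F)(v := None)\<rparr>"
| "apply_op F (Upd v) = F"
| "apply_op F (Qry v) = F"

definition cur :: "'v rforest \<Rightarrow> 'v op list \<Rightarrow> nat \<Rightarrow> 'v rforest" where
  "cur F ops i = foldl apply_op F (take i ops)"

fun legal_op :: "'v rforest \<Rightarrow> 'v op \<Rightarrow> bool" where
  "legal_op G (Cut v) \<longleftrightarrow> v \<in> verts G \<and> v \<notin> aux G \<and> par G v \<noteq> None"
| "legal_op G (Upd v) \<longleftrightarrow> v \<in> verts G \<and> v \<notin> aux G"
| "legal_op G (Qry v) \<longleftrightarrow> v \<in> verts G \<and> v \<notin> aux G"

definition legal :: "'v rforest \<Rightarrow> 'v op list \<Rightarrow> bool" where
  "legal F ops \<longleftrightarrow> (\<forall>i < length ops. legal_op (cur F ops i) (ops ! i))"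

section \<open>Formal group values (free commutative group on the update arguments)\<close>

type_synonym fval = "nat \<Rightarrow> int"

definition gen :: "nat \<Rightarrow> fval" where
  "gen i = (\<lambda>k. if k = i then 1 else 0)"

text \<open>Weight of u before operation i (initial weights are all zero;
  update-weight sets the weight).\<close>
definition wt :: "'v op list \<Rightarrow> nat \<Rightarrow> 'v \<Rightarrow> fval" where
  "wt ops i u = (if \<exists>j<i. ops ! j = Upd u
                 then gen (GREATEST j. j < i \<and> ops ! j = Upd u)
                 else (\<lambda>_. 0))"

definition tsum :: "'v rforest \<Rightarrow> 'v op list \<Rightarrow> nat \<Rightarrow> 'v \<Rightarrow> fval" where
  "tsum F ops i v = (\<lambda>k. \<Sum>u \<in> {u. connected (cur F ops i) u v}. wt ops i u k)"

datatype operand = Cell nat | Inp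
datatype instr = Mov nat operand | Add nat operand operand | Sub nat operand operand

type_synonym mem = "nat \<Rightarrow> fval"

fun ev :: "fval \<Rightarrow> mem \<Rightarrow> operand \<Rightarrow> fval" where
  "ev x M (Cell c) = M c"
| "ev x M Inp = x"

fun exec_instr :: "fval \<Rightarrow> instr \<Rightarrow> mem \<Rightarrow> mem" where
  "exec_instr x (Mov t a) M = M(t := ev x M a)"
| "exec_instr x (Add t a b) M = M(t := (\<lambda>k. ev x M a k + ev x M b k))"
| "exec_instr x (Sub t a b) M = M(t := (\<lambda>k. ev x M a k - ev x M b k))"

definition exec_prog :: "fval \<Rightarrow> instr list \<Rightarrow> mem \<Rightarrow> mem" where
  "exec_prog x is M = fold (exec_instr x) is M"

text \<open>A data structure (for a fixed initial forest) maps the history of operation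
  descriptors (ending with the current one) to a straight-line program and the
  cell holding the answer. Control flow may depend on anything but group values.\<close>
type_synonym 'v ds = "'v op list \<Rightarrow> instr list \<times> nat"

definition inp :: "'v op list \<Rightarrow> nat \<Rightarrow> fval" where
  "inp ops i = (case ops ! i of Upd _ \<Rightarrow> gen i | _ \<Rightarrow> (\<lambda>_. 0))"

fun memAt :: "'v ds \<Rightarrow> 'v op list \<Rightarrow> nat \<Rightarrow> mem" where
  "memAt D ops 0 = (\<lambda>_ _. 0)"
| "memAt D ops (Suc i) = exec_prog (inp ops i) (fst (D (take (Suc i) ops))) (memAt D ops i)"

definition correct :: "'v rforest \<Rightarrow> 'v ds \<Rightarrow> bool" where
  "correct F D \<longleftrightarrow> (\<forall>ops. legal F ops \<longrightarrow>
     (\<forall>i < length ops. \<forall>v. ops ! i = Qry v \<longrightarrow>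
        memAt D ops (Suc i) (snd (D (take (Suc i) ops))) = tsum F ops i v))"

fun icost :: "instr \<Rightarrow> nat" where
  "icost (Mov _ _) = 0"
| "icost (Add _ _ _) = 1"
| "icost (Sub _ _ _) = 1"

definition cost :: "'v ds \<Rightarrow> 'v op list \<Rightarrow> nat" where
  "cost D ops = (\<Sum>i < length ops. sum_list (map icost (fst (D (take (Suc i) ops)))))"

definition OPTZ :: "'v rforest \<Rightarrow> nat \<Rightarrow> nat" where
  "OPTZ F m = (LEAST k. \<exists>D. correct F D \<and>
      (\<forall>ops. legal F ops \<and> length ops = m \<longrightarrow> cost D ops \<le> k))"

end

theory Submission
  imports Defs
begin


definition cutF :: "'v rforest \<Rightarrow> 'v set \<Rightarrow> 'v rforest" where
  "cutF G C = G\<lparr>par := (\<lambda>v. if v \<in> C then None else par G v)\<rparr>"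

definition cutset :: "'v op list \<Rightarrow> 'v set" where
  "cutset xs = {v. Cut v \<in> set xs}"

lemma cutF_simps[simp]: "verts (cutF G C) = verts G" "aux (cutF G C) = aux G"
  "par (cutF G C) v = (if v \<in> C then None else par G v)"
  by (simp_all add: cutF_def)

declare cutF_simps(3)[simp del]

lemma induced_simps[simp]: "verts (induced G U) = verts G \<inter> U" "aux (induced G U) = aux G \<inter> U"
  by (simp_all add: induced_def)

lemma foldl_cut: "foldl apply_op G xs = cutF G (cutset xs)"
proof (induction xs arbitrary: G)
  case Nil
  then show ?case by (simp add: cutF_def cutset_def)
next
  case (Cons a xs)
  show ?case
    by (cases a) (auto simp: Cons cutF_def cutset_def fun_eq_iff)
qed

lemma cur_eq: "cur G xs i = cutF G (cutset (take i xs))"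
  by (simp add: cur_def foldl_cut)

lemma cur_verts[simp]: "verts (cur G xs i) = verts G" "aux (cur G xs i) = aux G"
  by (simp_all add: cur_eq)

lemma induced_cutF: "induced (cutF G C) U = cutF (induced G U) C"
  by (simp add: induced_def cutF_def fun_eq_iff)

lemma induced_cutF_disj: "C \<inter> U = C' \<inter> U \<Longrightarrow> induced (cutF G C) U = induced (cutF G C') U"
  by (auto simp add: induced_def cutF_def fun_eq_iff)

lemma pedges_cutF: "pedges (cutF G C) \<subseteq> pedges G"
  by (auto simp: pedges_def cutF_simps(3) split: if_splits)

lemma pedges_induced: "pedges (induced G U) = pedges G \<inter> (U \<times> U)"
  by (auto simp: pedges_def induced_def split: option.splits if_splits)

lemma sv_pedges: "single_valued (pedges G)"
  by (auto simp: single_valued_def pedges_def)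

lemma sv_star: assumes "single_valued E"
  shows "(u, v) \<in> (E \<union> E\<inverse>)\<^sup>* \<longleftrightarrow> (\<exists>w. (u, w) \<in> E\<^sup>* \<and> (v, w) \<in> E\<^sup>*)"
proof
  assume "(u, v) \<in> (E \<union> E\<inverse>)\<^sup>*"
  then show "\<exists>w. (u, w) \<in> E\<^sup>* \<and> (v, w) \<in> E\<^sup>*"
  proof (induction rule: rtrancl_induct)
    case base then show ?case by blast
  next
    case (step y z)
    then obtain w where w: "(u, w) \<in> E\<^sup>*" "(y, w) \<in> E\<^sup>*" by blast
    show ?case
    proof (cases "(y, z) \<in> E")
      case True
      then have "(y, z) \<in> E\<^sup>*" by blast
      from single_valued_confluent[OF assms this w(2)]
      show ?thesis
      proof
        assume "(z, w) \<in> E\<^sup>*"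
        then show ?thesis using w by blast
      next
        assume "(w, z) \<in> E\<^sup>*"
        then have "(u, z) \<in> E\<^sup>*" using w(1) by (meson rtrancl_trans)
        then show ?thesis by blast
      qed
    next
      case False
      then have "(z, y) \<in> E" using step by blast
      then show ?thesis using w by (meson converse_rtrancl_into_rtrancl)
    qed
  qed
next
  assume "\<exists>w. (u, w) \<in> E\<^sup>* \<and> (v, w) \<in> E\<^sup>*"
  then obtain w where w: "(u, w) \<in> E\<^sup>*" "(v, w) \<in> E\<^sup>*" by blast
  have 1: "(u, w) \<in> (E \<union> E\<inverse>)\<^sup>*" using w(1) rtrancl_mono[of E "E \<union> E\<inverse>"] by blast
  have "(w, v) \<in> (E\<inverse>)\<^sup>*" using w(2) by (simp add: rtrancl_converse)
  then have 2: "(w, v) \<in> (E \<union> E\<inverse>)\<^sup>*" using rtrancl_mono[of "E\<inverse>" "E \<union> E\<inverse>"] by blast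
  show "(u, v) \<in> (E \<union> E\<inverse>)\<^sup>*" using 1 2 by (rule rtrancl_trans)
qed

lemma prefix_lemma:
  assumes sv: "single_valued R" and ac: "acyclic R" and SR: "S \<subseteq> R"
    and uw: "(u, w) \<in> S\<^sup>*"
  shows "(u, x) \<in> R\<^sup>* \<Longrightarrow> (x, w) \<in> R\<^sup>* \<Longrightarrow> (u, x) \<in> S\<^sup>*"
  using uw
proof (induction arbitrary: x rule: converse_rtrancl_induct)
  case base
  show ?case
  proof (cases "x = w")
    case True then show ?thesis by simp
  next
    case False
    then have "(w, x) \<in> R\<^sup>+" using base by (metis rtranclD)
    then have "(w, w) \<in> R\<^sup>+" using base(2) by (rule trancl_rtrancl_trancl)
    then show ?thesis using ac by (simp add: acyclic_def)
  qed
next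
  case (step y z)
  show ?case
  proof (cases "y = x")
    case True then show ?thesis by simp
  next
    case False
    then have "(y, x) \<in> R\<^sup>+" using step(4) by (metis rtranclD)
    then obtain y1 where y1: "(y, y1) \<in> R" "(y1, x) \<in> R\<^sup>*" by (meson tranclD)
    have "(y, z) \<in> R" using step(1) SR by blast
    with y1 sv have "y1 = z" by (auto simp: single_valued_def)
    then have "(z, x) \<in> S\<^sup>*" using step y1 by blast
    then show ?thesis using step(1) by (meson converse_rtrancl_into_rtrancl)
  qed
qed

lemma meet_lemma:
  assumes sv: "single_valued R" and SR: "S \<subseteq> R" and TR: "T \<subseteq> R"
    and uw: "(u, w) \<in> S\<^sup>*"
  shows "(u, w) \<in> T\<^sup>* \<Longrightarrow> (u, w) \<in> (S \<inter> T)\<^sup>*"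
  using uw
proof (induction rule: converse_rtrancl_induct)
  case base then show ?case by simp
next
  case (step y z)
  show ?case
  proof (cases "y = w")
    case True then show ?thesis by simp
  next
    case False
    then obtain y1 where y1: "(y, y1) \<in> T" "(y1, w) \<in> T\<^sup>*" using step(4)
      by (meson converse_rtranclE)
    have "(y, z) \<in> R" using step(1) SR by blast
    with y1 sv TR have "y1 = z" by (auto simp: single_valued_def)
    then show ?thesis using step y1 by (meson IntI converse_rtrancl_into_rtrancl)
  qed
qed

lemma conn_cut_induced:
  assumes rf: "rooted_forest F" and cv: "convex F U" and u: "u \<in> U" and v: "v \<in> U"
  shows "connected (cutF F C) u v \<longleftrightarrow> connected (induced (cutF F C) U) u v"
proof -
  define R where "R = pedges F"
  define S where "S = pedges (cutF F C)"
  define T where "T = pedges (induced F U)"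
  have UV: "U \<subseteq> verts F" using cv by (simp add: convex_def)
  have svR: "single_valued R" and svS: "single_valued S" and svT: "single_valued T"
    and svST: "single_valued (S \<inter> T)"
    unfolding R_def S_def T_def by (auto simp: single_valued_def pedges_def)
  have ac: "acyclic R" using rf by (simp add: rooted_forest_def R_def)
  have SR: "S \<subseteq> R" unfolding S_def R_def by (rule pedges_cutF)
  have TR: "T \<subseteq> R" unfolding T_def R_def by (simp add: pedges_induced)
  have STeq: "pedges (induced (cutF F C) U) = S \<inter> T"
    using SR unfolding S_def T_def R_def by (auto simp: pedges_induced)
  show ?thesis
  proof
    assume "connected (cutF F C) u v"
    then have "(u, v) \<in> (S \<union> S\<inverse>)\<^sup>*" by (simp add: connected_def S_def)
    then obtain w where w: "(u, w) \<in> S\<^sup>*" "(v, w) \<in> S\<^sup>*" using sv_star[OF svS] by blast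
    have "(S \<union> S\<inverse>)\<^sup>* \<subseteq> (R \<union> R\<inverse>)\<^sup>*" using SR by (intro rtrancl_mono) blast
    then have "connected F u v" using \<open>(u, v) \<in> (S \<union> S\<inverse>)\<^sup>*\<close> u v UV
      by (auto simp: connected_def R_def)
    then have "connected (induced F U) u v" using cv u v by (simp add: convex_def)
    then have "(u, v) \<in> (T \<union> T\<inverse>)\<^sup>*" by (simp add: connected_def T_def)
    then obtain w' where w': "(u, w') \<in> T\<^sup>*" "(v, w') \<in> T\<^sup>*" using sv_star[OF svT] by blast
    have uwR: "(u, w) \<in> R\<^sup>*" "(v, w) \<in> R\<^sup>*" using w rtrancl_mono[OF SR] by blast+
    have uw'R: "(u, w') \<in> R\<^sup>*" "(v, w') \<in> R\<^sup>*" using w' rtrancl_mono[OF TR] by blast+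
    have "\<exists>z. (u, z) \<in> S\<^sup>* \<and> (v, z) \<in> S\<^sup>* \<and> (u, z) \<in> T\<^sup>* \<and> (v, z) \<in> T\<^sup>*"
      using single_valued_confluent[OF svR uwR(1) uw'R(1)]
    proof
      assume ww': "(w, w') \<in> R\<^sup>*"
      have "(u, w) \<in> T\<^sup>*" using prefix_lemma[OF svR ac TR w'(1) uwR(1) ww'] .
      moreover have "(v, w) \<in> T\<^sup>*" using prefix_lemma[OF svR ac TR w'(2) uwR(2) ww'] .
      ultimately show ?thesis using w by blast
    next
      assume ww': "(w', w) \<in> R\<^sup>*"
      have "(u, w') \<in> S\<^sup>*" using prefix_lemma[OF svR ac SR w(1) uw'R(1) ww'] .
      moreover have "(v, w') \<in> S\<^sup>*" using prefix_lemma[OF svR ac SR w(2) uw'R(2) ww'] .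
      ultimately show ?thesis using w' by blast
    qed
    then obtain z where z: "(u, z) \<in> S\<^sup>*" "(v, z) \<in> S\<^sup>*" "(u, z) \<in> T\<^sup>*" "(v, z) \<in> T\<^sup>*"
      by blast
    have "(u, z) \<in> (S \<inter> T)\<^sup>*" "(v, z) \<in> (S \<inter> T)\<^sup>*"
      using meet_lemma[OF svR SR TR z(1) z(3)] meet_lemma[OF svR SR TR z(2) z(4)] .
    then have "(u, v) \<in> ((S \<inter> T) \<union> (S \<inter> T)\<inverse>)\<^sup>*" using sv_star[OF svST] by blast
    then show "connected (induced (cutF F C) U) u v"
      using u v UV by (auto simp: connected_def STeq)
  next
    assume "connected (induced (cutF F C) U) u v"
    then have "(u, v) \<in> ((S \<inter> T) \<union> (S \<inter> T)\<inverse>)\<^sup>*" by (simp add: connected_def STeq)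
    moreover have "((S \<inter> T) \<union> (S \<inter> T)\<inverse>)\<^sup>* \<subseteq> (S \<union> S\<inverse>)\<^sup>*" by (intro rtrancl_mono) blast
    ultimately show "connected (cutF F C) u v" using u v UV by (auto simp: connected_def S_def)
  qed
qed

lemma sum_conn:
  assumes rf: "rooted_forest F" and cv: "convex F U" and v: "v \<in> U"
    and f0: "\<And>u. u \<notin> U \<Longrightarrow> f u = 0"
  shows "(\<Sum>u\<in>{u. connected (cutF F C) u v}. f u) = (\<Sum>u\<in>{u. connected (induced (cutF F C) U) u v}. f u)"
proof -
  define A where "A = {u. connected (cutF F C) u v}"
  have "A \<subseteq> verts F" unfolding A_def connected_def by simp
  moreover have "finite (verts F)" using rf unfolding rooted_forest_def by simp
  ultimately have fin: "finite A" by (rule finite_subset)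
  have "(\<Sum>u\<in>A. f u) = (\<Sum>u\<in>A \<inter> U. f u)"
  proof (rule sum.mono_neutral_right[OF fin])
    show "A \<inter> U \<subseteq> A" by blast
    show "\<forall>i\<in>A - A \<inter> U. f i = 0" using f0 by blast
  qed
  also have "A \<inter> U = {u. connected (induced (cutF F C) U) u v}"
  proof (rule set_eqI)
    fix u
    show "u \<in> A \<inter> U \<longleftrightarrow> u \<in> {u. connected (induced (cutF F C) U) u v}"
    proof (cases "u \<in> U")
      case True
      then show ?thesis using conn_cut_induced[OF rf cv True v, of C] unfolding A_def by blast
    next
      case False
      have "\<not> connected (induced (cutF F C) U) u v"
        using False unfolding connected_def by simp
      then show ?thesis using False by blast
    qed
  qed
  finally show ?thesis unfolding A_def .
qed

lemma legal_Upd: "legal G ops \<Longrightarrow> j < length ops \<Longrightarrow> ops ! j = Upd u \<Longrightarrow> u \<in> verts G"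
  unfolding legal_def by (metis cur_verts(1) legal_op.simps(2))

lemma legal_Qry: "legal G ops \<Longrightarrow> j < length ops \<Longrightarrow> ops ! j = Qry u \<Longrightarrow> u \<in> verts G"
  unfolding legal_def by (metis cur_verts(1) legal_op.simps(3))

lemma legal_Cut: "legal G ops \<Longrightarrow> j < length ops \<Longrightarrow> ops ! j = Cut u \<Longrightarrow> u \<in> verts G"
  unfolding legal_def by (metis cur_verts(1) legal_op.simps(1))

lemma cutset_sub: "legal (induced F U) ops \<Longrightarrow> cutset ops \<subseteq> U"
  unfolding cutset_def by (auto simp: in_set_conv_nth dest: legal_Cut)

lemma cutset_append[simp]: "cutset (xs @ ys) = cutset xs \<union> cutset ys"
  by (auto simp: cutset_def)

lemma par_induced_None: "par (induced G U) v \<noteq> None \<Longrightarrow> par G v \<noteq> None \<and> v \<in> U"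
  by (auto simp: induced_def split: option.splits if_splits)

lemma par_induced_Some: "par (induced G U) v = Some y \<Longrightarrow> par G v = Some y"
  by (auto simp: induced_def split: option.splits if_splits)

lemma legal_op_lift:
  assumes "legal_op (cutF (induced F U) C) op" "\<And>v. op = Cut v \<Longrightarrow> v \<notin> C'"
  shows "legal_op (cutF F (C \<union> C')) op"
  using assms by (cases op) (auto simp: cutF_simps(3) dest!: par_induced_Some split: if_splits)

lemma legal_append:
  assumes d: "U1 \<inter> U2 = {}" and l1: "legal (induced F U1) xs" and l2: "legal (induced F U2) ys"
  shows "legal F (xs @ ys)"
  unfolding legal_def
proof (intro allI impI)
  fix i assume i: "i < length (xs @ ys)"
  show "legal_op (cur F (xs @ ys) i) ((xs @ ys) ! i)"
  proof (cases "i < length xs")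
    case True
    have "legal_op (cutF (induced F U1) (cutset (take i xs))) (xs ! i)"
      using l1 True by (simp add: legal_def cur_eq)
    from legal_op_lift[OF this, of "{}"] show ?thesis using True
      by (simp add: cur_eq nth_append)
  next
    case False
    define j where "j = i - length xs"
    have j: "j < length ys" "i = length xs + j" using i False by (auto simp: j_def)
    have lo: "legal_op (cutF (induced F U2) (cutset (take j ys))) (ys ! j)"
      using l2 j by (simp add: legal_def cur_eq)
    have "legal_op (cutF F (cutset (take j ys) \<union> cutset xs)) (ys ! j)"
    proof (rule legal_op_lift[OF lo])
      fix v assume "ys ! j = Cut v"
      then have "v \<in> U2" using legal_Cut[OF l2 j(1)] by simp
      then show "v \<notin> cutset xs" using cutset_sub[OF l1] d by blast
    qed
    then show ?thesis using j by (simp add: cur_eq nth_append Un_commute)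
  qed
qed

lemma wt_zero: "legal (induced F U) ops \<Longrightarrow> i \<le> length ops \<Longrightarrow> u \<notin> U \<Longrightarrow> wt ops i u = (\<lambda>_. 0)"
proof -
  assume l: "legal (induced F U) ops" and i: "i \<le> length ops" and u: "u \<notin> U"
  have "\<not> (\<exists>j<i. ops ! j = Upd u)"
  proof
    assume "\<exists>j<i. ops ! j = Upd u"
    then obtain j where j: "j < i" "ops ! j = Upd u" by blast
    then have "j < length ops" using i by simp
    then have "u \<in> verts (induced F U)" using legal_Upd[OF l _ j(2)] by simp
    then show False using u by simp
  qed
  then show ?thesis by (auto simp: wt_def)
qed

lemma tsum1:
  assumes rf: "rooted_forest F" and cv: "convex F U" and l: "legal (induced F U) ops"
    and i: "i < length ops" and q: "ops ! i = Qry v"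
  shows "tsum (induced F U) ops i v = tsum F ops i v"
proof -
  have v: "v \<in> U" using legal_Qry[OF l i q] by simp
  show ?thesis
    unfolding tsum_def cur_eq induced_cutF[symmetric]
    by (rule ext, rule sum_conn[OF rf cv v, symmetric]) (use wt_zero[OF l] i in auto)
qed

definition shift :: "nat \<Rightarrow> fval \<Rightarrow> fval" where
  "shift l f = (\<lambda>k. f (k + l))"

lemma wt_shift: "shift (length xs) (wt (xs @ ys) (length xs + i) u) = wt ys i u"
proof (cases "\<exists>j<i. ys ! j = Upd u")
  case True
  define g where "g = (GREATEST j. j < i \<and> ys ! j = Upd u)"
  have g: "g < i \<and> ys ! g = Upd u" unfolding g_def
    using True by (metis (mono_tags, lifting) GreatestI_nat less_imp_le)
  have gmax: "j \<le> g" if "j < i" "ys ! j = Upd u" for j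
    unfolding g_def using that by (metis (mono_tags, lifting) Greatest_le_nat less_imp_le)
  have "(GREATEST j. j < length xs + i \<and> (xs @ ys) ! j = Upd u) = length xs + g"
  proof (rule Greatest_equality)
    show "length xs + g < length xs + i \<and> (xs @ ys) ! (length xs + g) = Upd u"
      using g by (simp add: nth_append)
  next
    fix y assume y: "y < length xs + i \<and> (xs @ ys) ! y = Upd u"
    show "y \<le> length xs + g"
    proof (cases "y < length xs")
      case False
      have "y - length xs < i" using conjunct1[OF y] False by linarith
      then have "y - length xs \<le> g" using y False gmax[of "y - length xs"] by (simp add: nth_append)
      then show ?thesis by simp
    qed simp
  qed
  moreover have "\<exists>j<length xs + i. (xs @ ys) ! j = Upd u" using g
    by (intro exI[of _ "length xs + g"]) (simp add: nth_append)
  ultimately show ?thesis using True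
    by (simp add: wt_def shift_def gen_def g_def fun_eq_iff)
next
  case False
  show ?thesis
  proof (cases "\<exists>j<length xs + i. (xs @ ys) ! j = Upd u")
    case True
    define P where "P = (\<lambda>j. j < length xs + i \<and> (xs @ ys) ! j = Upd u)"
    have "P (Greatest P)" using True unfolding P_def
      by (metis (mono_tags, lifting) GreatestI_nat less_imp_le)
    then have "Greatest P < length xs" using False unfolding P_def
      by (metis add_diff_inverse_nat add_less_cancel_left nth_append_length_plus)
    then show ?thesis using True False
      by (simp add: wt_def shift_def gen_def P_def fun_eq_iff)
  next
    case F2: False
    then show ?thesis using False by (auto simp: wt_def shift_def)
  qed
qed

lemma tsum2:
  assumes rf: "rooted_forest F" and cv: "convex F U" and l: "legal (induced F U) ys"
    and i: "i < length ys" and q: "ys ! i = Qry v" and d: "cutset xs \<inter> U = {}"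
  shows "shift (length xs) (tsum F (xs @ ys) (length xs + i) v) = tsum (induced F U) ys i v"
proof (rule ext)
  fix k
  have v: "v \<in> U" using legal_Qry[OF l i q] by simp
  define C where "C = cutset xs \<union> cutset (take i ys)"
  have e: "induced (cutF F (cutset (take i ys))) U = induced (cutF F C) U"
    unfolding C_def by (rule induced_cutF_disj) (use d in blast)
  have c1: "cur F (xs @ ys) (length xs + i) = cutF F C" by (simp add: cur_eq C_def)
  have c2: "cur (induced F U) ys i = induced (cutF F C) U"
    by (simp only: cur_eq induced_cutF[symmetric] e)
  have ws: "wt (xs @ ys) (length xs + i) u (k + length xs) = wt ys i u k" for u
    using fun_cong[OF wt_shift[of xs ys i u], of k] by (simp only: shift_def)
  have "shift (length xs) (tsum F (xs @ ys) (length xs + i) v) k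
      = (\<Sum>u\<in>{u. connected (cutF F C) u v}. wt (xs @ ys) (length xs + i) u (k + length xs))"
    by (simp only: shift_def tsum_def c1)
  also have "\<dots> = (\<Sum>u\<in>{u. connected (cutF F C) u v}. wt ys i u k)"
    by (simp only: ws)
  also have "\<dots> = (\<Sum>u\<in>{u. connected (induced (cutF F C) U) u v}. wt ys i u k)"
    by (rule sum_conn[OF rf cv v]) (use wt_zero[OF l] i in auto)
  also have "\<dots> = tsum (induced F U) ys i v k"
    by (simp only: tsum_def c2)
  finally show "shift (length xs) (tsum F (xs @ ys) (length xs + i) v) k = tsum (induced F U) ys i v k" .
qed



lemma exec_prog_Nil[simp]: "exec_prog x [] M = M"
  by (simp add: exec_prog_def)
lemma exec_prog_Cons[simp]: "exec_prog x (ins # is) M = exec_prog x is (exec_instr x ins M)"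
  by (simp add: exec_prog_def)

lemma ev_shift: "ev (shift l x) (\<lambda>c. shift l (M c)) a = shift l (ev x M a)"
  by (cases a) auto

lemma ev_shift': "ev (\<lambda>k. x (k + l)) (\<lambda>c k. M c (k + l)) a xa = ev x M a (xa + l)"
  by (cases a) auto

lemma exec_instr_shift:
  "exec_instr (shift l x) ins (\<lambda>c. shift l (M c)) = (\<lambda>c. shift l (exec_instr x ins M c))"
  by (cases ins) (auto simp: ev_shift' fun_eq_iff shift_def)

lemma exec_shift:
  "exec_prog (shift l x) is (\<lambda>c. shift l (M c)) = (\<lambda>c. shift l (exec_prog x is M c))"
proof (induction "is" arbitrary: M)
  case Nil then show ?case by simp
next
  case (Cons a "is")
  show ?case by (simp add: exec_instr_shift Cons)
qed

lemma exec_instr_supp: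
  assumes "\<And>k. n \<le> k \<Longrightarrow> x k = 0" "\<And>c k. n \<le> k \<Longrightarrow> M c k = 0" "n \<le> k"
  shows "exec_instr x ins M c k = 0"
proof -
  have ev0: "ev x M a k = 0" for a using assms by (cases a) auto
  show ?thesis using assms ev0 by (cases ins) auto
qed

lemma exec_supp:
  assumes "\<And>k. n \<le> k \<Longrightarrow> x k = 0"
  shows "(\<And>c k. n \<le> k \<Longrightarrow> M c k = 0) \<Longrightarrow> n \<le> k \<Longrightarrow> exec_prog x is M c k = 0"
proof (induction "is" arbitrary: M c k)
  case Nil then show ?case by simp
next
  case (Cons a "is")
  have "exec_instr x a M c k = 0" if "n \<le> k" for c k
    using exec_instr_supp[of n x M k a c] assms Cons.prems(1) that by blast
  then show ?case using Cons by simp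
qed

lemma memAt_supp: "n \<le> k \<Longrightarrow> memAt D ops n c k = 0"
proof (induction n arbitrary: c k)
  case 0 then show ?case by simp
next
  case (Suc n)
  have "\<And>k. Suc n \<le> k \<Longrightarrow> inp ops n k = 0"
    by (auto simp: inp_def gen_def split: op.splits)
  then show ?case using exec_supp[of "Suc n" "inp ops n"] Suc by simp
qed

lemma inp_shift: "shift (length xs) (inp (xs @ ys) (length xs + i)) = inp ys i"
  by (cases "ys ! i") (auto simp: inp_def shift_def gen_def nth_append fun_eq_iff)

lemma memAt_D2:
  "memAt (\<lambda>zs. D (xs @ zs)) ys i = (\<lambda>c. shift (length xs) (memAt D (xs @ ys) (length xs + i) c))"
proof (induction i)
  case 0
  show ?case by (auto simp: fun_eq_iff shift_def memAt_supp)
next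
  case (Suc i)
  have t: "take (Suc (length xs + i)) (xs @ ys) = xs @ take (Suc i) ys" by simp
  show ?case
    by (simp only: memAt.simps Suc add_Suc_right t exec_shift[symmetric] inp_shift)
qed

lemma sum_split_nat: fixes a b :: nat shows "(\<Sum>i<a + b. f i) = (\<Sum>i<a. f i) + (\<Sum>i<b. f (a + i)) "
  by (induction b) (simp_all add: add.assoc)

lemma cost_append: "cost D (xs @ ys) = cost D xs + cost (\<lambda>zs. D (xs @ zs)) ys"
proof -
  have "cost D (xs @ ys) = (\<Sum>i<length xs + length ys. sum_list (map icost (fst (D (take (Suc i) (xs @ ys))))))"
    by (simp add: cost_def)
  also have "\<dots> = (\<Sum>i<length xs. sum_list (map icost (fst (D (take (Suc i) (xs @ ys))))))
      + (\<Sum>i<length ys. sum_list (map icost (fst (D (take (Suc (length xs + i)) (xs @ ys))))))"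
    by (rule sum_split_nat)
  also have "(\<Sum>i<length xs. sum_list (map icost (fst (D (take (Suc i) (xs @ ys))))))
      = cost D xs"
    unfolding cost_def by (rule sum.cong) auto
  also have "(\<Sum>i<length ys. sum_list (map icost (fst (D (take (Suc (length xs + i)) (xs @ ys))))))
      = cost (\<lambda>zs. D (xs @ zs)) ys"
    unfolding cost_def by (rule sum.cong) auto
  finally show ?thesis .
qed

lemma legal_Nil[simp]: "legal G []" by (simp add: legal_def)
lemma cost_Nil[simp]: "cost D [] = 0" by (simp add: cost_def)

lemma lower:
  assumes "correct G D"
  shows "\<exists>ops. legal G ops \<and> length ops \<le> m \<and> OPTZ G m \<le> cost D ops"
proof (rule ccontr)
  assume "\<not> ?thesis"
  then have H: "\<And>ops. legal G ops \<Longrightarrow> length ops \<le> m \<Longrightarrow> cost D ops < OPTZ G m"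
    by (meson not_le)
  have pos: "0 < OPTZ G m" using H[of "[]"] by simp
  have "\<exists>D. correct G D \<and> (\<forall>ops. legal G ops \<and> length ops = m \<longrightarrow> cost D ops \<le> OPTZ G m - 1)"
  proof (intro exI[of _ D] conjI allI impI)
    show "correct G D" by (rule assms)
    fix ops assume "legal G ops \<and> length ops = m"
    then have "cost D ops < OPTZ G m" using H by simp
    then show "cost D ops \<le> OPTZ G m - 1" by linarith
  qed
  then have "OPTZ G m \<le> OPTZ G m - 1"
    unfolding OPTZ_def[of G m] by (rule Least_le)
  then show False using pos by simp
qed

lemma extend:
  assumes l: "legal G ops" and a: "a \<in> verts G" "a \<notin> aux G" and len: "length ops \<le> m"
  shows "legal G (ops @ replicate (m - length ops) (Qry a)) \<and> length (ops @ replicate (m - length ops) (Qry a)) = m"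
proof
  show "length (ops @ replicate (m - length ops) (Qry a)) = m" using len by simp
  show "legal G (ops @ replicate (m - length ops) (Qry a))"
    unfolding legal_def
  proof (intro allI impI)
    fix i assume i: "i < length (ops @ replicate (m - length ops) (Qry a))"
    show "legal_op (cur G (ops @ replicate (m - length ops) (Qry a)) i) ((ops @ replicate (m - length ops) (Qry a)) ! i)"
    proof (cases "i < length ops")
      case True
      have "cur G (ops @ replicate (m - length ops) (Qry a)) i = cur G ops i"
        using True by (simp add: cur_def)
      then show ?thesis using l True by (simp add: legal_def nth_append)
    next
      case False
      then show ?thesis using i a by (simp add: nth_append)
    qed
  qed
qed

definition Jset :: "'v rforest \<Rightarrow> 'v op list \<Rightarrow> nat \<Rightarrow> 'v \<Rightarrow> nat set" where
  "Jset F xs i v = (\<lambda>u. GREATEST j. j < i \<and> xs ! j = Upd u) `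
      {u. connected (cur F xs i) u v \<and> (\<exists>j<i. xs ! j = Upd u)}"

definition naive :: "'v rforest \<Rightarrow> 'v ds" where
  "naive F xs = (let i = length xs - 1 in
     (Mov i Inp # (case last xs of Qry v \<Rightarrow> map (\<lambda>j. Add i (Cell i) (Cell j)) (sorted_list_of_set (Jset F xs i v))
                                  | _ \<Rightarrow> []), i))"

fun tgt :: "instr \<Rightarrow> nat" where
  "tgt (Mov t _) = t" | "tgt (Add t _ _) = t" | "tgt (Sub t _ _) = t"

lemma exec_other: "(\<forall>ins\<in>set is. tgt ins \<noteq> c) \<Longrightarrow> exec_prog x is M c = M c"
proof (induction "is" arbitrary: M)
  case Nil then show ?case by simp
next
  case (Cons a "is")
  then show ?case by (cases a) auto
qed

lemma naive_tgt: "ins \<in> set (fst (naive F xs)) \<Longrightarrow> tgt ins = length xs - 1"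
  by (auto simp: naive_def Let_def split: op.splits)

lemma naive_snd: "snd (naive F xs) = length xs - 1"
  by (simp add: naive_def Let_def)

lemma take_Suc_facts: "i < length ops \<Longrightarrow> length (take (Suc i) ops) - 1 = i \<and> last (take (Suc i) ops) = ops ! i"
  by (simp add: take_Suc_conv_app_nth)

lemma stable:
  assumes "n \<le> length ops"
  shows "j < n \<Longrightarrow> memAt (naive F) ops n j = memAt (naive F) ops (Suc j) j"
  using assms
proof (induction n)
  case 0 then show ?case by simp
next
  case (Suc n)
  show ?case
  proof (cases "j = n")
    case True then show ?thesis by simp
  next
    case False
    then have jn: "j < n" using Suc by simp
    have n: "n < length ops" using Suc by simp
    have "\<forall>ins\<in>set (fst (naive F (take (Suc n) ops))). tgt ins \<noteq> j"
      using naive_tgt take_Suc_facts[OF n] jn by fastforce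
    then have "memAt (naive F) ops (Suc n) j = memAt (naive F) ops n j"
      by (simp add: exec_other)
    then show ?thesis using Suc jn by simp
  qed
qed

lemma upd_cell:
  assumes j: "j < length ops" and u: "ops ! j = Upd u"
  shows "memAt (naive F) ops (Suc j) j = gen j"
proof -
  have "naive F (take (Suc j) ops) = ([Mov j Inp], j)"
    using take_Suc_facts[OF j] u by (simp add: naive_def Let_def)
  then show ?thesis using u by (simp add: inp_def)
qed

lemma adds: "t \<notin> set js \<Longrightarrow>
  exec_prog x (map (\<lambda>j. Add t (Cell t) (Cell j)) js) M = M(t := (\<lambda>k. M t k + sum_list (map (\<lambda>j. M j k) js)))"
proof (induction js arbitrary: M)
  case Nil then show ?case by (simp add: fun_eq_iff)
next
  case (Cons j js)
  let ?M' = "M(t := (\<lambda>k. M t k + M j k))"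
  have "exec_prog x (map (\<lambda>j. Add t (Cell t) (Cell j)) (j # js)) M
      = exec_prog x (map (\<lambda>j. Add t (Cell t) (Cell j)) js) ?M'" by simp
  also have "\<dots> = ?M'(t := (\<lambda>k. ?M' t k + sum_list (map (\<lambda>j. ?M' j k) js)))"
    by (rule Cons.IH) (use Cons.prems in simp)
  also have "(\<lambda>k. sum_list (map (\<lambda>j. ?M' j k) js)) = (\<lambda>k. sum_list (map (\<lambda>j. M j k) js))"
    using Cons.prems by (intro ext arg_cong[where f=sum_list] map_cong) auto
  finally show ?case
    by (simp add: fun_eq_iff add.assoc)
qed

lemma Jset_take: "Jset F (take (Suc i) ops) i v = Jset F ops i v"
proof -
  have c: "cur F (take (Suc i) ops) i = cur F ops i" by (simp add: cur_def min_def)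
  have e: "(j < i \<and> take (Suc i) ops ! j = Upd u) \<longleftrightarrow> (j < i \<and> ops ! j = Upd u)" for j u
    by auto
  show ?thesis unfolding Jset_def c e ..
qed

lemma Jset_mem: "j \<in> Jset F ops i v \<Longrightarrow> j < i \<and> (\<exists>u. ops ! j = Upd u)"
proof -
  assume "j \<in> Jset F ops i v"
  then obtain u where u: "\<exists>j<i. ops ! j = Upd u" and j: "j = (GREATEST j. j < i \<and> ops ! j = Upd u)"
    unfolding Jset_def by blast
  have "j < i \<and> ops ! j = Upd u" unfolding j using u
    by (metis (mono_tags, lifting) GreatestI_nat less_imp_le)
  then show ?thesis by blast
qed

lemma Jset_finite: "finite (Jset F ops i v)"
  by (rule finite_subset[of _ "{..<i}"]) (auto dest: Jset_mem)

lemma qry_cell: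
  assumes i: "i < length ops" and q: "ops ! i = Qry v"
  shows "memAt (naive F) ops (Suc i) i = (\<lambda>k. \<Sum>j\<in>Jset F ops i v. gen j k)"
proof -
  define J where "J = Jset F ops i v"
  define L where "L = sorted_list_of_set J"
  have fJ: "finite J" unfolding J_def by (rule Jset_finite)
  have setL: "set L = J" "distinct L" unfolding L_def using fJ by auto
  have iL: "i \<notin> set L" using setL Jset_mem unfolding J_def by fastforce
  have nv: "naive F (take (Suc i) ops) = (Mov i Inp # map (\<lambda>j. Add i (Cell i) (Cell j)) L, i)"
    using take_Suc_facts[OF i] q by (simp add: naive_def Let_def Jset_take L_def J_def)
  define M where "M = memAt (naive F) ops i"
  have inp0: "inp ops i = (\<lambda>_. 0)" using q by (simp add: inp_def)
  have Mj: "M j = gen j" if "j \<in> J" for j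
  proof -
    have jj: "j \<in> Jset F ops i v" using that by (simp only: J_def)
    from Jset_mem[OF jj] obtain u where ju: "j < i" "ops ! j = Upd u" by blast
    have il: "i \<le> length ops" using i by simp
    have jl: "j < length ops" using i ju by simp
    have "M j = memAt (naive F) ops (Suc j) j" unfolding M_def by (rule stable[OF il ju(1)])
    also have "\<dots> = gen j" by (rule upd_cell[OF jl ju(2)])
    finally show ?thesis .
  qed
  have "memAt (naive F) ops (Suc i) i = exec_prog (inp ops i) (map (\<lambda>j. Add i (Cell i) (Cell j)) L) (M(i := (\<lambda>_. 0))) i"
    by (simp add: nv M_def inp0)
  also have "\<dots> = (\<lambda>k. sum_list (map (\<lambda>j. (M(i := (\<lambda>_. 0))) j k) L))"
    using adds[OF iL] by simp
  also have "\<dots> = (\<lambda>k. sum_list (map (\<lambda>j. gen j k) L))"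
    using iL setL Mj by (intro ext arg_cong[where f=sum_list] map_cong) auto
  also have "\<dots> = (\<lambda>k. \<Sum>j\<in>J. gen j k)"
    using setL by (simp add: sum_list_distinct_conv_sum_set)
  finally show ?thesis unfolding J_def .
qed

lemma tsum_naive:
  assumes fin: "finite (verts F)"
  shows "tsum F ops i v = (\<lambda>k. \<Sum>j\<in>Jset F ops i v. gen j k)"
proof (rule ext)
  fix k
  define A where "A = {u. connected (cur F ops i) u v}"
  define A' where "A' = {u. connected (cur F ops i) u v \<and> (\<exists>j<i. ops ! j = Upd u)}"
  define g where "g = (\<lambda>u. GREATEST j. j < i \<and> ops ! j = Upd u)"
  have "A \<subseteq> verts F" unfolding A_def connected_def by simp
  then have fA: "finite A" using fin by (rule finite_subset)
  have gp: "g u < i \<and> ops ! g u = Upd u" if "\<exists>j<i. ops ! j = Upd u" for u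
    unfolding g_def using that by (metis (mono_tags, lifting) GreatestI_nat less_imp_le)
  have inj: "inj_on g A'"
  proof
    fix x y assume "x \<in> A'" "y \<in> A'" "g x = g y"
    then have ex: "\<exists>j<i. ops ! j = Upd x" "\<exists>j<i. ops ! j = Upd y" unfolding A'_def by simp_all
    have "ops ! g x = Upd x" "ops ! g y = Upd y" using gp[OF ex(1)] gp[OF ex(2)] by simp_all
    then show "x = y" using \<open>g x = g y\<close> by (metis op.inject(2))
  qed
  have "tsum F ops i v k = (\<Sum>u\<in>A. wt ops i u k)" by (simp add: tsum_def A_def)
  also have "\<dots> = (\<Sum>u\<in>A'. wt ops i u k)"
    by (rule sum.mono_neutral_right[OF fA]) (auto simp: A_def A'_def wt_def)
  also have "\<dots> = (\<Sum>u\<in>A'. gen (g u) k)"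
    by (rule sum.cong) (auto simp: A'_def wt_def g_def)
  also have "\<dots> = (\<Sum>j\<in>g ` A'. gen j k)"
    using sum.reindex[OF inj, of "\<lambda>j. gen j k"] by (simp add: o_def)
  also have "g ` A' = Jset F ops i v" by (simp add: Jset_def g_def A'_def)
  finally show "tsum F ops i v k = (\<Sum>j\<in>Jset F ops i v. gen j k)" .
qed

lemma correct_naive:
  fixes F :: "'v rforest"
  assumes fin: "finite (verts F)"
  shows "correct F (naive F)"
  unfolding correct_def
proof (intro allI impI)
  fix ops :: "'v op list" and i v
  assume i: "i < length ops" and q: "ops ! i = Qry v"
  have "snd (naive F (take (Suc i) ops)) = i" using take_Suc_facts[OF i] by (simp add: naive_snd)
  then show "memAt (naive F) ops (Suc i) (snd (naive F (take (Suc i) ops))) = tsum F ops i v"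
    using qry_cell[OF i q] tsum_naive[OF fin] by simp
qed

lemma legal_ops_in: "legal G ops \<Longrightarrow> set ops \<subseteq> Cut ` verts G \<union> Upd ` verts G \<union> Qry ` verts G"
proof
  fix x assume l: "legal G ops" and "x \<in> set ops"
  then obtain j where j: "j < length ops" "ops ! j = x" by (auto simp: in_set_conv_nth)
  show "x \<in> Cut ` verts G \<union> Upd ` verts G \<union> Qry ` verts G"
    using legal_Cut[OF l j(1)] legal_Upd[OF l j(1)] legal_Qry[OF l j(1)] j(2) by (cases x) auto
qed

lemma exists_bound:
  assumes fin: "finite (verts F)"
  shows "\<exists>k D. correct F D \<and> (\<forall>ops. legal F ops \<and> length ops = m \<longrightarrow> cost D ops \<le> k)"
proof -
  define S where "S = {xs. set xs \<subseteq> Cut ` verts F \<union> Upd ` verts F \<union> Qry ` verts F \<and> length xs = m}"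
  have fS: "finite S" unfolding S_def using fin by (intro finite_lists_length_eq) auto
  have "cost (naive F) ops \<le> (\<Sum>xs\<in>S. cost (naive F) xs)" if "legal F ops \<and> length ops = m" for ops
    using that legal_ops_in[of F ops] by (intro member_le_sum[OF _ _ fS]) (auto simp: S_def)
  then show ?thesis using correct_naive[OF fin] by blast
qed


lemma legal_nonempty_vertex:
  assumes "legal G ops" "ops \<noteq> []"
  shows "\<exists>a. a \<in> verts G \<and> a \<notin> aux G"
proof -
  have "legal_op (cur G ops 0) (ops ! 0)" using assms by (simp add: legal_def)
  then show ?thesis by (cases "ops ! 0") auto
qed

theorem lemma20:
  fixes F :: "'v rforest" and U1 U2 :: "'v set" and m1 m2 :: nat
  assumes "rooted_forest F"
    and "U1 \<union> U2 = verts F" and "U1 \<inter> U2 = {}"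
    and "convex F U1" and "convex F U2"
  shows "OPTZ (induced F U1) m1 + OPTZ (induced F U2) m2 \<le> OPTZ F (m1 + m2)"
proof -
  note rf = assms(1) and d = assms(3) and cv1 = assms(4) and cv2 = assms(5)
  have fin: "finite (verts F)" using rf by (simp add: rooted_forest_def)
  have "\<exists>D. correct F D \<and> (\<forall>ops. legal F ops \<and> length ops = m1 + m2 \<longrightarrow> cost D ops \<le> OPTZ F (m1 + m2))"
    unfolding OPTZ_def[of F "m1 + m2"] by (rule LeastI_ex) (rule exists_bound[OF fin])
  then obtain D where D: "correct F D"
    and bound: "\<And>ops. legal F ops \<Longrightarrow> length ops = m1 + m2 \<Longrightarrow> cost D ops \<le> OPTZ F (m1 + m2)"
    by blast
  have corr1: "correct (induced F U1) D"
    unfolding correct_def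
  proof (intro allI impI)
    fix ops :: "'v op list" and i v
    assume l: "legal (induced F U1) ops" and i: "i < length ops" and q: "ops ! i = Qry v"
    have lF: "legal F ops" using legal_append[OF d l legal_Nil] by simp
    have "memAt D ops (Suc i) (snd (D (take (Suc i) ops))) = tsum F ops i v"
      using D lF i q by (simp add: correct_def)
    also have "\<dots> = tsum (induced F U1) ops i v" using tsum1[OF rf cv1 l i q] by simp
    finally show "memAt D ops (Suc i) (snd (D (take (Suc i) ops))) = tsum (induced F U1) ops i v" .
  qed
  obtain ops1 where l1: "legal (induced F U1) ops1" and len1: "length ops1 \<le> m1"
    and c1: "OPTZ (induced F U1) m1 \<le> cost D ops1"
    using lower[OF corr1] by blast
  define D2 where "D2 = (\<lambda>zs. D (ops1 @ zs))"
  have d1: "cutset ops1 \<inter> U2 = {}" using cutset_sub[OF l1] d by blast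
  have corr2: "correct (induced F U2) D2"
    unfolding correct_def
  proof (intro allI impI)
    fix ys :: "'v op list" and i v
    assume l: "legal (induced F U2) ys" and i: "i < length ys" and q: "ys ! i = Qry v"
    have lF: "legal F (ops1 @ ys)" using legal_append[OF d l1 l] .
    have i': "length ops1 + i < length (ops1 @ ys)" using i by simp
    have q': "(ops1 @ ys) ! (length ops1 + i) = Qry v" using q by (simp add: nth_append)
    have t: "take (Suc (length ops1 + i)) (ops1 @ ys) = ops1 @ take (Suc i) ys" by simp
    have "memAt D (ops1 @ ys) (Suc (length ops1 + i)) (snd (D (take (Suc (length ops1 + i)) (ops1 @ ys))))
        = tsum F (ops1 @ ys) (length ops1 + i) v"
      using D lF i' q' unfolding correct_def by blast
    then have "memAt D (ops1 @ ys) (length ops1 + Suc i) (snd (D (ops1 @ take (Suc i) ys)))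
        = tsum F (ops1 @ ys) (length ops1 + i) v" by (simp only: t add_Suc_right)
    then have "memAt D2 ys (Suc i) (snd (D2 (take (Suc i) ys)))
        = shift (length ops1) (tsum F (ops1 @ ys) (length ops1 + i) v)"
      unfolding D2_def memAt_D2 by simp
    also have "\<dots> = tsum (induced F U2) ys i v" by (rule tsum2[OF rf cv2 l i q d1])
    finally show "memAt D2 ys (Suc i) (snd (D2 (take (Suc i) ys))) = tsum (induced F U2) ys i v" .
  qed
  obtain ops2 where l2: "legal (induced F U2) ops2" and len2: "length ops2 \<le> m2"
    and c2: "OPTZ (induced F U2) m2 \<le> cost D2 ops2"
    using lower[OF corr2] by blast
  have lF: "legal F (ops1 @ ops2)" using legal_append[OF d l1 l2] .
  have cs: "cost D (ops1 @ ops2) = cost D ops1 + cost D2 ops2"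
    unfolding D2_def by (rule cost_append)
  show ?thesis
  proof (cases "ops1 @ ops2 = []")
    case True
    then show ?thesis using c1 c2 cs by simp
  next
    case False
    obtain a where a: "a \<in> verts F" "a \<notin> aux F" using legal_nonempty_vertex[OF lF False] by blast
    define ext where "ext = replicate (m1 + m2 - length (ops1 @ ops2)) (Qry a)"
    have lenle: "length (ops1 @ ops2) \<le> m1 + m2" using len1 len2 by simp
    have e: "legal F ((ops1 @ ops2) @ ext) \<and> length ((ops1 @ ops2) @ ext) = m1 + m2"
      unfolding ext_def by (rule extend[OF lF a lenle])
    have "cost D (ops1 @ ops2) \<le> cost D ((ops1 @ ops2) @ ext)"
      using cost_append[of D "ops1 @ ops2" ext] by simp
    also have "\<dots> \<le> OPTZ F (m1 + m2)" using bound e by blast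
    finally show ?thesis using c1 c2 cs by simp
  qed
qed

end
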